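(* Let $p$ be an odd prime and $n\ge1$. Let $g_0,\ldots,g_{p-1}$ be quadratic near-bent functions from $\mathbb{F}_{p^n}$ to $\mathbb{F}_p$ whose corresponding linearized polynomials $L_0,\ldots,L_{p-1}$ all have the same kernel $\{c\beta: c\in\mathbb{F}_p\}$ in $\mathbb{F}_{p^n}$, for some $\beta\in\mathbb{F}_{p^n}^*$. Let $b_0,\ldots,b_{p-1}\in\mathbb{F}_{p^n}$ satisfy $g_k(\beta)+\mathrm{Tr}_n(b_k\beta)=g_0(\beta)+k$ for $0\le k\le p-1$. Then the near-bent functions $f_k(x)=g_k(x)+\mathrm{Tr}_n(b_kx)$, $0\le k\le p-1$, satisfy $\mathrm{supp}(\widehat{f_i})\cap\mathrm{supp}(\widehat{f_j})=\emptyset$ for $0\le i\ne j\le p-1$.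
   Context: $\epsilon_p=e^{2\pi i/p}$, $\mathrm{Tr}_n$ the absolute trace, $\widehat{f}(b)=\sum_{x\in\mathbb{F}_{p^n}}\epsilon_p^{f(x)-\mathrm{Tr}_n(bx)}$, $\mathrm{supp}(\widehat f)=\{b:\widehat f(b)\ne0\}$. Near-bent: $|\widehat{f}(b)|^2\in\{0,p^{n+1}\}$ for all $b$. A quadratic function is $g(x)=\mathrm{Tr}_n\big(\sum_{i=0}^l a_ix^{p^i+1}\big)$ with $a_i\in\mathbb{F}_{p^n}$; its corresponding linearized polynomial is $L(z)=\sum_{i=0}^l\big(a_i^{p^l}z^{p^{l+i}}+a_i^{p^{l-i}}z^{p^{l-i}}\big)$, regarded as an $\mathbb{F}_p$-linear map on $\mathbb{F}_{p^n}$. *)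

theory Defs
  imports "HOL-Analysis.Analysis"
begin

text \<open>The finite field F_{p^n} is modelled by a finite field type 'a with
  CHAR('a) = p and CARD('a) = p^n.  F_p is its prime subfield
  {of_nat k | k < p}; F_p-valued functions are 'a-valued functions whose
  values lie in the prime subfield.\<close>

definition tr :: "nat \<Rightarrow> nat \<Rightarrow> 'a::field \<Rightarrow> 'a" where
  "tr p n x = (\<Sum>i<n. x ^ (p ^ i))"

definition fp_val :: "nat \<Rightarrow> 'a::field \<Rightarrow> nat" where
  "fp_val p y = (THE k. k < p \<and> of_nat k = y)"

definition epsp :: "nat \<Rightarrow> 'a::field \<Rightarrow> complex" where
  "epsp p y = cis (2 * pi * real (fp_val p y) / real p)"

definition walsh :: "nat \<Rightarrow> nat \<Rightarrow> ('a::{field,finite} \<Rightarrow> 'a) \<Rightarrow> 'a \<Rightarrow> complex" where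
  "walsh p n f b = (\<Sum>x\<in>UNIV. epsp p (f x - tr p n (b * x)))"

definition walsh_supp :: "nat \<Rightarrow> nat \<Rightarrow> ('a::{field,finite} \<Rightarrow> 'a) \<Rightarrow> 'a set" where
  "walsh_supp p n f = {b. walsh p n f b \<noteq> 0}"

definition near_bent :: "nat \<Rightarrow> nat \<Rightarrow> ('a::{field,finite} \<Rightarrow> 'a) \<Rightarrow> bool" where
  "near_bent p n f \<longleftrightarrow>
     (\<forall>b. (cmod (walsh p n f b))\<^sup>2 \<in> {0, real p ^ (n + 1)})"

definition quad_fun :: "nat \<Rightarrow> nat \<Rightarrow> nat \<Rightarrow> (nat \<Rightarrow> 'a::field) \<Rightarrow> 'a \<Rightarrow> 'a" where
  "quad_fun p n l a x = tr p n (\<Sum>i\<le>l. a i * x ^ (p ^ i + 1))"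

definition lin_poly :: "nat \<Rightarrow> nat \<Rightarrow> (nat \<Rightarrow> 'a::field) \<Rightarrow> 'a \<Rightarrow> 'a" where
  "lin_poly p l a z =
     (\<Sum>i\<le>l. a i ^ (p ^ l) * z ^ (p ^ (l + i)) + a i ^ (p ^ (l - i)) * z ^ (p ^ (l - i)))"

end

theory Submission
  imports Defs "HOL-Computational_Algebra.Computational_Algebra" "HOL-Number_Theory.Cong"
begin

lemma frob_pow:
  assumes "CHAR('a::field) = p" "prime p"
  shows "((x::'a) + y) ^ (p ^ i) = x ^ (p ^ i) + y ^ (p ^ i)"
  by (rule freshmans_dream') (use assms in auto)

lemma frob_minus:
  assumes "CHAR('a::field) = p" "prime p"
  shows "((x::'a) - y) ^ (p ^ i) = x ^ (p ^ i) - y ^ (p ^ i)"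
proof -
  have "x ^ (p ^ i) = ((x - y) + y) ^ (p ^ i)" by simp
  also have "\<dots> = (x - y) ^ (p ^ i) + y ^ (p ^ i)" by (rule frob_pow[OF assms])
  finally show ?thesis by (simp add: algebra_simps)
qed

lemma pow_card_same:
  fixes x :: "'a::{field,finite}"
  shows "x ^ CARD('a) = x"
proof (cases "x = 0")
  case False
  have "x * (\<Prod>y\<in>UNIV-{0}. x * y) = x * x ^ (card (UNIV :: 'a set) - 1) * \<Prod>(UNIV-{0})"
    by (simp add: prod.distrib mult_ac)
  also have "x * x ^ (card (UNIV :: 'a set) - 1) = x ^ Suc (card (UNIV :: 'a set) - 1)"
    by (subst power_Suc) auto
  also have "Suc (card (UNIV :: 'a set) - 1) = card (UNIV :: 'a set)"
    using finite_UNIV_card_ge_0[where ?'a = 'a] by simp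
  also have "(\<Prod>y\<in>UNIV-{0}. x * y) = (\<Prod>y\<in>UNIV-{0}. y)"
    by (rule prod.reindex_bij_witness[of _ "\<lambda>y. y / x" "\<lambda>y. x * y"]) (use False in auto)
  finally show ?thesis
    by simp
qed (use finite_UNIV_card_ge_0[where ?'a = 'a] in auto)

lemma tr_zero: "prime p \<Longrightarrow> tr p n (0::'a::field) = 0"
  unfolding tr_def by (auto simp: zero_power prime_gt_0_nat intro!: sum.neutral)

lemma tr_add:
  assumes "CHAR('a::field) = p" "prime p"
  shows "tr p n ((x::'a) + y) = tr p n x + tr p n y"
  unfolding tr_def by (simp add: frob_pow[OF assms] sum.distrib)

lemma tr_minus:
  assumes "CHAR('a::field) = p" "prime p"
  shows "tr p n ((x::'a) - y) = tr p n x - tr p n y"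
  unfolding tr_def by (simp add: frob_minus[OF assms] sum_subtractf)

lemma tr_sum:
  assumes "CHAR('a::field) = p" "prime p"
  shows "tr p n (\<Sum>i\<in>A. (f i::'a)) = (\<Sum>i\<in>A. tr p n (f i))"
proof (induction A rule: infinite_finite_induct)
  case (infinite A) then show ?case using tr_zero[OF assms(2)] by simp
next
  case empty then show ?case using tr_zero[OF assms(2)] by simp
next
  case (insert x F) then show ?case by (simp add: tr_add[OF assms])
qed

lemma tr_pow_p:
  assumes "CHAR('a::{field,finite}) = p" "prime p" "CARD('a) = p ^ n" "n \<ge> 1"
  shows "tr p n ((x::'a) ^ p) = tr p n x"
proof -
  define f where "f i = x ^ (p ^ i)" for i
  have fn: "f n = f 0" unfolding f_def using pow_card_same[of x] assms(3) by simp
  have "tr p n (x ^ p) = (\<Sum>i<n. f (Suc i))"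
    unfolding tr_def f_def by (simp add: power_mult[symmetric] mult.commute)
  also have "\<dots> = (\<Sum>i<Suc n. f i) - f 0"
    using sum.lessThan_Suc_shift[of f n] by simp
  also have "\<dots> = (\<Sum>i<n. f i)" using fn by simp
  finally show ?thesis unfolding tr_def f_def .
qed

lemma tr_pow_pm:
  assumes "CHAR('a::{field,finite}) = p" "prime p" "CARD('a) = p ^ n" "n \<ge> 1"
  shows "tr p n ((x::'a) ^ (p ^ m)) = tr p n x"
proof (induction m)
  case 0 then show ?case by simp
next
  case (Suc m)
  have "x ^ (p ^ Suc m) = (x ^ (p ^ m)) ^ p" by (metis power_Suc2 power_mult)
  then show ?case using Suc tr_pow_p[OF assms] by simp
qed

lemma tr_fix:
  assumes "CHAR('a::{field,finite}) = p" "prime p" "CARD('a) = p ^ n" "n \<ge> 1"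
  shows "(tr p n (x::'a)) ^ p = tr p n x"
proof -
  have "(tr p n x) ^ p = (\<Sum>i<n. (x ^ (p ^ i)) ^ p)"
    unfolding tr_def by (rule freshmans_dream_sum) (use assms in auto)
  also have "\<dots> = (\<Sum>i<n. (x ^ p) ^ (p ^ i))"
    by (simp add: power_mult[symmetric] mult.commute)
  also have "\<dots> = tr p n (x ^ p)" unfolding tr_def ..
  finally show ?thesis using tr_pow_p[OF assms] by simp
qed

lemma ofnat_fix:
  assumes "CHAR('a::field) = p" "prime p"
  shows "(of_nat k :: 'a) ^ p = of_nat k"
proof (induction k)
  case 0 then show ?case using assms(2) by (simp add: prime_gt_0_nat)
next
  case (Suc k)
  have "(of_nat (Suc k) :: 'a) ^ p = (of_nat k + 1) ^ (p ^ 1)" by (simp add: add.commute)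
  also have "\<dots> = of_nat k ^ p + 1" by (subst frob_pow[OF assms]) simp
  finally show ?case using Suc by (simp add: add.commute)
qed

lemma ofnat_inj:
  assumes "CHAR('a::field) = p" "i < p" "j < p" "(of_nat i :: 'a) = of_nat j"
  shows "i = j"
  using assms by (auto simp: of_nat_eq_iff_cong_CHAR cong_def)

lemma pf_char:
  assumes "CHAR('a::field) = p" "prime p" "(y::'a) ^ p = y"
  shows "\<exists>k<p. y = of_nat k"
proof -
  define q :: "'a poly" where "q = monom 1 p + [:0, -1:]"
  have p2: "p \<ge> 2" using assms(2) prime_ge_2_nat by blast
  have dq: "degree q = p" unfolding q_def using p2
    by (subst degree_add_eq_left) (auto simp: degree_monom_eq)
  have q0: "q \<noteq> 0" using dq p2 by auto
  have roots: "{x. poly q x = 0} = {x. x ^ p = x}" unfolding q_def by (auto simp: poly_monom)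
  define S where "S = (of_nat ` {..<p} :: 'a set)"
  have cS: "card S = p" unfolding S_def
    by (subst card_image) (auto intro!: inj_onI ofnat_inj[OF assms(1)])
  have sub: "S \<subseteq> {x. poly q x = 0}" unfolding roots S_def using ofnat_fix[OF assms(1,2)] by auto
  have fin: "finite {x. poly q x = 0}" using poly_roots_finite[OF q0] .
  have "card {x. poly q x = 0} \<le> p" using card_poly_roots_bound[OF q0] dq by simp
  then have "S = {x. poly q x = 0}" using card_subset_eq[OF fin sub] cS card_mono[OF fin sub] by simp
  then have "y \<in> S" using assms(3) roots by auto
  then show ?thesis unfolding S_def by auto
qed

lemma fp_val_ofnat:
  assumes "CHAR('a::field) = p" "k < p"
  shows "fp_val p (of_nat k :: 'a) = k"
  unfolding fp_val_def
  by (rule the_equality) (use assms ofnat_inj[OF assms(1)] in auto)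

lemma omega_pow_p:
  assumes "prime p"
  shows "cis (2 * pi / real p) ^ p = 1"
proof -
  have "p > 0" using assms prime_gt_0_nat by blast
  then show ?thesis unfolding Complex.DeMoivre by simp
qed

lemma epsp_ofnat:
  assumes "CHAR('a::field) = p" "prime p"
  shows "epsp p (of_nat k :: 'a) = cis (2 * pi / real p) ^ k"
proof -
  have p0: "p > 0" using assms prime_gt_0_nat by blast
  have e: "(of_nat k :: 'a) = of_nat (k mod p)"
    using assms(1) by (simp add: of_nat_eq_iff_cong_CHAR cong_def)
  have "fp_val p (of_nat k :: 'a) = k mod p"
    by (subst e, rule fp_val_ofnat[OF assms(1)]) (use p0 in auto)
  then have "epsp p (of_nat k :: 'a) = cis (2 * pi / real p) ^ (k mod p)"
    unfolding epsp_def Complex.DeMoivre by (auto intro!: arg_cong[where f=cis] simp: field_simps)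
  also have "\<dots> = cis (2 * pi / real p) ^ k"
  proof -
    have "cis (2 * pi / real p) ^ k = cis (2 * pi / real p) ^ (p * (k div p) + k mod p)" by simp
    also have "\<dots> = cis (2 * pi / real p) ^ (k mod p)"
      by (simp only: power_add power_mult omega_pow_p[OF assms(2)]) simp
    finally show ?thesis by simp
  qed
  finally show ?thesis .
qed

lemma epsp_add:
  assumes "CHAR('a::field) = p" "prime p" "(y::'a) ^ p = y" "c ^ p = c"
  shows "epsp p (y + c) = epsp p y * epsp p c"
proof -
  obtain j where j: "y = of_nat j" using pf_char[OF assms(1,2,3)] by blast
  obtain m where m: "c = of_nat m" using pf_char[OF assms(1,2,4)] by blast
  have "epsp p (y + c) = epsp p (of_nat (j + m) :: 'a)" using j m by simp
  also have "\<dots> = cis (2 * pi / real p) ^ (j + m)" by (rule epsp_ofnat[OF assms(1,2)])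
  also have "\<dots> = epsp p y * epsp p c" using j m by (simp add: epsp_ofnat[OF assms(1,2)] power_add)
  finally show ?thesis .
qed

lemma epsp_one:
  assumes "CHAR('a::field) = p" "prime p" "(c::'a) ^ p = c" "epsp p c = 1"
  shows "c = 0"
proof -
  have p0: "p > 0" using assms prime_gt_0_nat by blast
  obtain m where m: "m < p" "c = of_nat m" using pf_char[OF assms(1,2,3)] by blast
  have "cis (real m * (2 * pi / real p)) = 1"
    using assms(4) m epsp_ofnat[OF assms(1,2), of m] unfolding Complex.DeMoivre by simp
  then have "cos (real m * (2 * pi / real p)) = 1" by (metis cis.sel(1) one_complex.sel(1))
  then obtain N :: int where N: "real m * (2 * pi / real p) = of_int N * 2 * pi"
    using cos_one_2pi_int by blast
  then have N': "real m = N * real p" using p0 by (simp add: field_simps)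
  have "N = 0"
  proof (rule ccontr)
    assume "N \<noteq> 0"
    then consider "N \<ge> 1" | "N \<le> -1" by linarith
    then show False
    proof cases
      case 1
      then have "N * real p \<ge> real p" using p0
      proof -
        have "(1::real) \<le> of_int N" using 1 by simp
        from mult_right_mono[OF this, of "real p"] show ?thesis by simp
      qed
      moreover have "real m < real p" using m(1) by simp
      ultimately show False using N' by linarith
    next
      case 2
      then have "N * real p < 0" using p0 by (simp add: mult_neg_pos)
      then show False using N' by simp
    qed
  qed
  then have "m = 0" using N' by simp
  then show ?thesis using m by simp
qed

lemma sum_zero_shift:
  fixes h :: "'a::{field,finite} \<Rightarrow> 'a"
  assumes "CHAR('a) = p" "prime p" "\<And>x. h x ^ p = h x" "c ^ p = c"
    and "\<And>x. h (x + \<beta>) = h x + c" "c \<noteq> 0"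
  shows "(\<Sum>x\<in>UNIV. epsp p (h x)) = 0"
proof -
  let ?S = "(\<Sum>x\<in>UNIV. epsp p (h x))"
  have "?S = (\<Sum>x\<in>UNIV. epsp p (h (x + \<beta>)))"
    by (rule sum.reindex_bij_witness[of _ "\<lambda>x. x + \<beta>" "\<lambda>x. x - \<beta>"]) auto
  also have "\<dots> = (\<Sum>x\<in>UNIV. epsp p (h x) * epsp p c)"
    by (rule sum.cong) (auto simp: assms(5) epsp_add[OF assms(1,2,3,4)])
  also have "\<dots> = ?S * epsp p c" by (simp add: sum_distrib_right)
  finally have "?S * (epsp p c - 1) = 0" by (simp add: algebra_simps)
  moreover have "epsp p c \<noteq> 1" using epsp_one[OF assms(1,2,4)] assms(6) by blast
  ultimately show ?thesis by simp
qed

lemma cross_term: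
  assumes "CHAR('a::{field,finite}) = p" "prime p" "CARD('a) = p ^ n" "n \<ge> 1" "i \<le> l"
  shows "tr p n ((c::'a) * x ^ (p ^ i) * \<beta> + c * x * \<beta> ^ (p ^ i)) =
         tr p n (x ^ (p ^ l) * (c ^ (p ^ l) * \<beta> ^ (p ^ (l + i)) + c ^ (p ^ (l - i)) * \<beta> ^ (p ^ (l - i))))"
proof -
  have e1: "p ^ i * p ^ (l - i) = p ^ l" using assms(5) by (simp flip: power_add)
  have e2: "p ^ i * p ^ l = p ^ (l + i)" by (simp add: power_add mult.commute)
  have "tr p n (c * x ^ (p ^ i) * \<beta>) = tr p n ((c * x ^ (p ^ i) * \<beta>) ^ (p ^ (l - i)))"
    by (rule tr_pow_pm[OF assms(1-4), symmetric])
  also have "(c * x ^ (p ^ i) * \<beta>) ^ (p ^ (l - i)) = c ^ (p ^ (l - i)) * x ^ (p ^ l) * \<beta> ^ (p ^ (l - i))"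
    by (simp add: power_mult_distrib flip: power_mult e1)
  finally have t1: "tr p n (c * x ^ (p ^ i) * \<beta>) = tr p n (c ^ (p ^ (l - i)) * x ^ (p ^ l) * \<beta> ^ (p ^ (l - i)))" .
  have "tr p n (c * x * \<beta> ^ (p ^ i)) = tr p n ((c * x * \<beta> ^ (p ^ i)) ^ (p ^ l))"
    by (rule tr_pow_pm[OF assms(1-4), symmetric])
  also have "(c * x * \<beta> ^ (p ^ i)) ^ (p ^ l) = c ^ (p ^ l) * x ^ (p ^ l) * \<beta> ^ (p ^ (l + i))"
    by (simp add: power_mult_distrib flip: power_mult e2)
  finally have t2: "tr p n (c * x * \<beta> ^ (p ^ i)) = tr p n (c ^ (p ^ l) * x ^ (p ^ l) * \<beta> ^ (p ^ (l + i)))" .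
  show ?thesis
    unfolding tr_add[OF assms(1,2)] t1 t2 distrib_left by (simp add: ac_simps)
qed

lemma quad_add:
  assumes "CHAR('a::{field,finite}) = p" "prime p" "CARD('a) = p ^ n" "n \<ge> 1"
  shows "quad_fun p n l a ((x::'a) + \<beta>) = quad_fun p n l a x + quad_fun p n l a \<beta>
           + tr p n (x ^ (p ^ l) * lin_poly p l a \<beta>)"
proof -
  have e: "a i * (x + \<beta>) ^ (p ^ i + 1) = a i * x ^ (p ^ i + 1) + a i * \<beta> ^ (p ^ i + 1)
           + (a i * x ^ (p ^ i) * \<beta> + a i * x * \<beta> ^ (p ^ i))" for i
  proof -
    have "(x + \<beta>) ^ (p ^ i + 1) = (x ^ (p ^ i) + \<beta> ^ (p ^ i)) * (x + \<beta>)"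
      by (simp add: frob_pow[OF assms(1,2)] mult.commute)
    then show ?thesis by (simp add: algebra_simps)
  qed
  have "quad_fun p n l a (x + \<beta>) = tr p n ((\<Sum>i\<le>l. a i * x ^ (p ^ i + 1)) + (\<Sum>i\<le>l. a i * \<beta> ^ (p ^ i + 1))
           + (\<Sum>i\<le>l. a i * x ^ (p ^ i) * \<beta> + a i * x * \<beta> ^ (p ^ i)))"
    unfolding quad_fun_def e by (simp add: sum.distrib)
  also have "\<dots> = quad_fun p n l a x + quad_fun p n l a \<beta>
           + (\<Sum>i\<le>l. tr p n (a i * x ^ (p ^ i) * \<beta> + a i * x * \<beta> ^ (p ^ i)))"
    unfolding quad_fun_def by (simp add: tr_add[OF assms(1,2)] tr_sum[OF assms(1,2)])
  also have "(\<Sum>i\<le>l. tr p n (a i * x ^ (p ^ i) * \<beta> + a i * x * \<beta> ^ (p ^ i)))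
      = (\<Sum>i\<le>l. tr p n (x ^ (p ^ l) * (a i ^ (p ^ l) * \<beta> ^ (p ^ (l + i)) + a i ^ (p ^ (l - i)) * \<beta> ^ (p ^ (l - i)))))"
    by (rule sum.cong) (auto intro: cross_term[OF assms])
  also have "\<dots> = tr p n (x ^ (p ^ l) * lin_poly p l a \<beta>)"
    unfolding lin_poly_def by (simp add: tr_sum[OF assms(1,2)] sum_distrib_left)
  finally show ?thesis .
qed

theorem theorem5:
  fixes p n :: nat
    and g :: "nat \<Rightarrow> 'a::{field,finite} \<Rightarrow> 'a"
    and l :: "nat \<Rightarrow> nat"
    and a :: "nat \<Rightarrow> nat \<Rightarrow> 'a"
    and b :: "nat \<Rightarrow> 'a"
    and \<beta> :: 'a
  assumes "prime p" and "odd p" and "n \<ge> 1"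
    and "CHAR('a) = p" and "CARD('a) = p ^ n"
    and quad: "\<And>k. k < p \<Longrightarrow> g k = quad_fun p n (l k) (a k)"
    and nb: "\<And>k. k < p \<Longrightarrow> near_bent p n (g k)"
    and "\<beta> \<noteq> 0"
    and ker: "\<And>k. k < p \<Longrightarrow>
               {z. lin_poly p (l k) (a k) z = 0} = {of_nat c * \<beta> | c. c < p}"
    and shift: "\<And>k. k < p \<Longrightarrow>
               g k \<beta> + tr p n (b k * \<beta>) = g 0 \<beta> + of_nat k"
  shows "(\<forall>k<p. near_bent p n (\<lambda>x. g k x + tr p n (b k * x))) \<and>
         (\<forall>i<p. \<forall>j<p. i \<noteq> j \<longrightarrow>
            walsh_supp p n (\<lambda>x. g i x + tr p n (b i * x)) \<inter>
            walsh_supp p n (\<lambda>x. g j x + tr p n (b j * x)) = {})"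
proof -
  note A = assms(4,1,5,3)
  note A2 = assms(4,1)
  have p1: "1 < p" using assms(1) prime_gt_1_nat by blast
  define f where "f = (\<lambda>k x. g k x + tr p n (b k * x))"
  have fk: "(\<lambda>x. g k x + tr p n (b k * x)) = f k" for k unfolding f_def by simp
  have L0: "lin_poly p (l k) (a k) \<beta> = 0" if "k < p" for k
  proof -
    have "\<beta> \<in> {of_nat c * \<beta> | c. c < p}" using p1 by (auto intro!: exI[of _ 1])
    then show ?thesis using ker[OF that] by blast
  qed
  have gshift: "g k (x + \<beta>) = g k x + g k \<beta>" if "k < p" for k x
    using quad_add[OF A, of "l k" "a k" x \<beta>] L0[OF that] tr_zero[OF assms(1)] quad[OF that] by simp
  have fshift: "f k (x + \<beta>) = f k x + (g 0 \<beta> + of_nat k)" if "k < p" for k x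
  proof -
    have "f k (x + \<beta>) = g k x + g k \<beta> + tr p n (b k * x) + tr p n (b k * \<beta>)"
      unfolding f_def by (simp add: gshift[OF that] distrib_left tr_add[OF A2])
    also have "\<dots> = f k x + (g k \<beta> + tr p n (b k * \<beta>))" unfolding f_def by (simp add: algebra_simps)
    finally show ?thesis using shift[OF that] by simp
  qed
  have fixadd: "(y + z) ^ p = y + z" if "y ^ p = y" "z ^ p = z" for y z :: 'a
    using frob_pow[OF A2, of y z 1] that by simp
  have fixminus: "(y - z) ^ p = y - z" if "y ^ p = y" "z ^ p = z" for y z :: 'a
    using frob_minus[OF A2, of y z 1] that by simp
  have fixtr: "(tr p n y) ^ p = tr p n y" for y :: 'a by (rule tr_fix[OF A])
  have fixg: "(g k x) ^ p = g k x" if "k < p" for k x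
    unfolding quad[OF that] quad_fun_def by (rule fixtr)
  have fixf: "(f k x) ^ p = f k x" if "k < p" for k x
    unfolding f_def by (rule fixadd[OF fixg[OF that] fixtr])
  have supp: "tr p n (b' * \<beta>) = g 0 \<beta> + of_nat k" if "k < p" "walsh p n (f k) b' \<noteq> 0" for k b'
  proof (rule ccontr)
    assume ne: "tr p n (b' * \<beta>) \<noteq> g 0 \<beta> + of_nat k"
    define c where "c = (g 0 \<beta> + of_nat k) - tr p n (b' * \<beta>)"
    define h where "h x = f k x - tr p n (b' * x)" for x
    have "(\<Sum>x\<in>UNIV. epsp p (h x)) = 0"
    proof (rule sum_zero_shift[OF A2])
      show "h x ^ p = h x" for x unfolding h_def by (rule fixminus[OF fixf[OF that(1)] fixtr])
      show "c ^ p = c" unfolding c_def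
        using fixadd[OF fixg[of 0] ofnat_fix[OF A2, of k]] fixminus fixtr p1 by simp
      show "h (x + \<beta>) = h x + c" for x
        unfolding h_def c_def fshift[OF that(1)] distrib_left tr_add[OF A2] by (simp add: algebra_simps)
      show "c \<noteq> 0" unfolding c_def using ne by simp
    qed
    then have "walsh p n (f k) b' = 0" unfolding walsh_def h_def .
    then show False using that(2) by simp
  qed
  have nbf: "near_bent p n (f k)" if "k < p" for k
  proof -
    have "walsh p n (f k) b' = walsh p n (g k) (b' - b k)" for b'
      unfolding walsh_def f_def
      by (rule sum.cong) (simp_all add: left_diff_distrib tr_minus[OF A2] algebra_simps)
    then show ?thesis using nb[OF that] unfolding near_bent_def by simp
  qed
  show ?thesis
    unfolding fk
  proof (intro conjI allI impI)
    show "near_bent p n (f k)" if "k < p" for k using nbf that by blast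
    fix i j assume ij: "i < p" "j < p" "i \<noteq> j"
    show "walsh_supp p n (f i) \<inter> walsh_supp p n (f j) = {}"
    proof (rule ccontr)
      assume "walsh_supp p n (f i) \<inter> walsh_supp p n (f j) \<noteq> {}"
      then obtain b' where w: "walsh p n (f i) b' \<noteq> 0" "walsh p n (f j) b' \<noteq> 0"
        unfolding walsh_supp_def by auto
      have "g 0 \<beta> + of_nat i = g 0 \<beta> + (of_nat j :: 'a)"
        using supp[OF ij(1) w(1)] supp[OF ij(2) w(2)] by simp
      then have "(of_nat i :: 'a) = of_nat j" by simp
      then show False using ofnat_inj[OF assms(4)] ij by blast
    qed
  qed
qed

end
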